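(* Let $0\le k<n$ and let $U\subset Gr(k,n)$. If $U$ is open, then $\bigcup_{\ell\in U}\ell$ is an open subset of $\mathbb{P}^n_{\mathbb{C}}$; if $U$ is closed, then $\bigcup_{\ell\in U}\ell$ is a closed subset of $\mathbb{P}^n_{\mathbb{C}}$.
   Context: $Gr(k,n)$ is the Grassmannian of $k$-dimensional projective subspaces of $\mathbb{P}^n_{\mathbb{C}}$, topologized by the Hausdorff metric on closed subsets of $\mathbb{P}^n_{\mathbb{C}}$ induced by the Fubini–Study metric (equivalently via the Plücker embedding into $\mathbb{P}(\bigwedge^{k+1}\mathbb{C}^{n+1})$). *)

theory Defs
  imports "HOL-Analysis.Analysis"
begin

text \<open>Complex projective space P(C^'n): its points are the complex lines
 (1-dimensional complex linear subspaces) of C^'n, where CARD('n) = n+1.\<close>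

definition proj_points :: "((complex^'n) set) set" where
  "proj_points = {L. vec.subspace L \<and> vec.dim L = 1}"

definition herm :: "complex^'n \<Rightarrow> complex^'n \<Rightarrow> complex" where
  "herm u v = (\<Sum>i\<in>UNIV. u$i * cnj (v$i))"

definition rep :: "(complex^'n) set \<Rightarrow> complex^'n" where
  "rep L = (SOME u. u \<in> L \<and> u \<noteq> 0)"

definition fs_dist :: "(complex^'n) set \<Rightarrow> (complex^'n) set \<Rightarrow> real" where
  "fs_dist L M = arccos (cmod (herm (rep L) (rep M)) / (norm (rep L) * norm (rep M)))"

definition hausdorff_dist :: "('a \<Rightarrow> 'a \<Rightarrow> real) \<Rightarrow> 'a set \<Rightarrow> 'a set \<Rightarrow> real" where
  "hausdorff_dist d A B =
     max (SUP a\<in>A. INF b\<in>B. d a b) (SUP b\<in>B. INF a\<in>A. d a b)"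

definition dist_topology :: "'a set \<Rightarrow> ('a \<Rightarrow> 'a \<Rightarrow> real) \<Rightarrow> 'a topology" where
  "dist_topology M d = topology (\<lambda>U. U \<subseteq> M \<and>
      (\<forall>x\<in>U. \<exists>e>0. \<forall>y\<in>M. d x y < e \<longrightarrow> y \<in> U))"

definition proj_topology :: "((complex^'n) set) topology" where
  "proj_topology = dist_topology proj_points fs_dist"

text \<open>A k-dimensional projective subspace, viewed as the set of points of
 projective space lying in a (k+1)-dimensional complex linear subspace W.\<close>
definition proj_subspace_of :: "(complex^'n) set \<Rightarrow> ((complex^'n) set) set" where
  "proj_subspace_of W = {L \<in> proj_points. L \<subseteq> W}"

definition grassmannian :: "nat \<Rightarrow> (((complex^'n) set) set) set" where
  "grassmannian k = {proj_subspace_of W | W. vec.subspace W \<and> vec.dim W = k + 1}"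

definition grassmannian_topology :: "nat \<Rightarrow> (((complex^'n) set) set) topology" where
  "grassmannian_topology k = dist_topology (grassmannian k) (hausdorff_dist fs_dist)"

end

theory Submission
  imports Defs
begin

lemma herm_cnj: "herm b a = cnj (herm a b)"
  unfolding herm_def by (simp add: mult.commute)

lemma Re_herm: "Re (herm a b) = inner a b"
  unfolding herm_def inner_vec_def by (simp add: inner_complex_def Re_sum)

lemma herm_self: "herm a a = complex_of_real ((norm a)^2)"
proof -
  have "herm a a = (\<Sum>i\<in>UNIV. complex_of_real ((cmod (a$i))^2))"
    unfolding herm_def by (simp add: complex_norm_square[symmetric])
  also have "\<dots> = complex_of_real (\<Sum>i\<in>UNIV. (norm (a$i))^2)" by simp
  also have "(\<Sum>i\<in>UNIV. (norm (a$i))^2) = (norm a)^2"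
    unfolding norm_vec_def L2_set_def by (simp add: sum_nonneg)
  finally show ?thesis .
qed

lemma herm_scale_left: "herm (c *s a) b = c * herm a b"
  unfolding herm_def by (simp add: sum_distrib_left mult.assoc)
lemma herm_scale_right: "herm a (c *s b) = cnj c * herm a b"
  unfolding herm_def by (simp add: sum_distrib_left mult_ac)
lemma herm_add_left: "herm (a + a') b = herm a b + herm a' b"
  unfolding herm_def by (simp add: distrib_right sum.distrib)
lemma herm_diff_left: "herm (a - a') b = herm a b - herm a' b"
  unfolding herm_def by (simp add: left_diff_distrib sum_subtractf)
lemma herm_add_right: "herm a (b + b') = herm a b + herm a b'"
  unfolding herm_def by (simp add: distrib_left sum.distrib)
lemma herm_diff_right: "herm a (b - b') = herm a b - herm a b'"
  unfolding herm_def by (simp add: right_diff_distrib sum_subtractf)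
lemma herm_zero_left[simp]: "herm 0 b = 0" unfolding herm_def by simp
lemma herm_zero_right[simp]: "herm a 0 = 0" unfolding herm_def by simp

lemma norm_scale: "norm (c *s (a::complex^'n)) = cmod c * norm a"
proof -
  have "(norm (c *s a))^2 = (cmod c * norm a)^2"
  proof -
    have "complex_of_real ((norm (c *s a))^2) = complex_of_real ((cmod c * norm a)^2)"
      unfolding herm_self[symmetric] herm_scale_left herm_scale_right
      by (simp add: herm_self power_mult_distrib complex_norm_square[symmetric] mult_ac)
    then show ?thesis using of_real_eq_iff by blast
  qed
  then show ?thesis by (simp add: power2_eq_iff_nonneg)
qed

lemma herm_CS: "cmod (herm a b) \<le> norm a * norm b"
proof (cases "herm a b = 0")
  case True then show ?thesis by simp
next
  case False
  define c where "c = cnj (herm a b) / complex_of_real (cmod (herm a b))"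
  have cm: "cmod c = 1" using False unfolding c_def by (simp add: norm_divide)
  have "complex_of_real (cmod (herm a b)) = c * herm a b"
    using False unfolding c_def
    by (simp add: mult.commute[of "cnj _"] complex_norm_square[symmetric] power2_eq_square)
  then have "cmod (herm a b) = Re (herm (c *s a) b)"
    by (metis Re_complex_of_real herm_scale_left)
  also have "\<dots> = inner (c *s a) b" by (rule Re_herm)
  also have "\<dots> \<le> norm (c *s a) * norm b" by (rule norm_cauchy_schwarz)
  also have "\<dots> = norm a * norm b" by (simp add: norm_scale cm)
  finally show ?thesis .
qed


lemma line_in_P: "(a::complex^'n) \<noteq> 0 \<Longrightarrow> vec.span {a} \<in> proj_points"
  unfolding proj_points_def
  by (simp add: vec.dim_span_eq_card_independent)

lemma rep_props:
  assumes "L \<in> proj_points"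
  shows "rep L \<in> L" "rep L \<noteq> 0" "L = vec.span {rep L}"
proof -
  have sL: "vec.subspace L" and dL: "vec.dim L = 1" using assms unfolding proj_points_def by auto
  have "\<exists>u. u \<in> L \<and> u \<noteq> 0"
  proof (rule ccontr)
    assume "\<not> ?thesis" then have "L \<subseteq> {0}" by auto
    then have "vec.dim L = 0" by simp
    with dL show False by simp
  qed
  then have r: "rep L \<in> L \<and> rep L \<noteq> 0" unfolding rep_def by (rule someI_ex)
  then show "rep L \<in> L" "rep L \<noteq> 0" by auto
  have "vec.span {rep L} \<subseteq> L" using r sL by (simp add: vec.span_minimal)
  moreover have "vec.dim (vec.span {rep L}) = 1" using r by (simp add: vec.dim_span_eq_card_independent)
  ultimately show "L = vec.span {rep L}"
    using vec.subspace_dim_equal[of "vec.span {rep L}" L] sL dL by simp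
qed

definition rat :: "complex^'n \<Rightarrow> complex^'n \<Rightarrow> real" where
  "rat a b = cmod (herm a b) / (norm a * norm b)"

lemma rat_scale: "c \<noteq> 0 \<Longrightarrow> c' \<noteq> 0 \<Longrightarrow> rat (c *s a) (c' *s b) = rat a b"
  unfolding rat_def by (simp add: herm_scale_left herm_scale_right norm_scale norm_mult)

lemma rat_bounds: "0 \<le> rat a b" "rat a b \<le> 1"
  unfolding rat_def using herm_CS[of a b]
  by (auto simp: divide_le_eq_1)

lemma in_span_single: "x \<in> vec.span {a} \<Longrightarrow> \<exists>c. x = c *s a"
  by (auto simp: vec.span_singleton)

lemma fs_dist_span:
  assumes "a \<noteq> 0" "b \<noteq> 0"
  shows "fs_dist (vec.span {a}) (vec.span {b}) = arccos (rat a b)"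
proof -
  have A: "vec.span {a} \<in> proj_points" "vec.span {b} \<in> proj_points" using assms line_in_P by auto
  obtain c where c: "rep (vec.span {a}) = c *s a" using rep_props(1)[OF A(1)] in_span_single by blast
  obtain c' where c': "rep (vec.span {b}) = c' *s b" using rep_props(1)[OF A(2)] in_span_single by blast
  have "c \<noteq> 0" "c' \<noteq> 0" using c c' rep_props(2)[OF A(1)] rep_props(2)[OF A(2)] by auto
  then show ?thesis unfolding fs_dist_def c c' rat_def[symmetric] by (simp add: rat_scale)
qed

lemma fs_dist_rat: "L \<in> proj_points \<Longrightarrow> fs_dist L M = arccos (rat (rep L) (rep M))"
  unfolding fs_dist_def rat_def by simp

lemma fs_dist_bounds: "0 \<le> fs_dist L M" "fs_dist L M \<le> pi"
  unfolding fs_dist_def rat_def[symmetric]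
  using rat_bounds[of "rep L" "rep M"] by (auto intro!: arccos_lbound arccos_ubound)

lemma rat_estimate:
  fixes a b :: "complex^'n"
  assumes a: "a \<noteq> 0" and ab: "norm (b - a) \<le> e * norm a" and e: "0 \<le> e" "e \<le> 1/2"
  shows "b \<noteq> 0" "1 - e^2 \<le> rat a b"
proof -
  define x where "x = norm a"
  define y where "y = norm b"
  have x: "x > 0" using a by (simp add: x_def)
  have "norm a - norm (b - a) \<le> norm b" by (metis add.commute diff_add_cancel norm_triangle_ineq4 norm_minus_commute le_diff_eq norm_diff_ineq)
  moreover have "e * norm a \<le> (1/2) * norm a" using e by (intro mult_right_mono) auto
  ultimately have y: "y \<ge> x / 2" using ab unfolding x_def y_def by linarith
  then have yp: "y > 0" using x by simp
  then show "b \<noteq> 0" by (simp add: y_def)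
  have "(norm (b - a))^2 = y^2 + x^2 - 2 * inner a b"
    unfolding x_def y_def power2_norm_eq_inner by (simp add: inner_diff_left inner_diff_right inner_commute)
  moreover have "(norm (b - a))^2 \<le> e^2 * x^2"
    using ab unfolding x_def by (metis norm_ge_zero power_mono power_mult_distrib)
  ultimately have ine: "2 * inner a b \<ge> x^2 + y^2 - e^2 * x^2" by simp
  have "inner a b \<le> cmod (herm a b)" by (metis Re_herm complex_Re_le_cmod)
  then have h: "x^2 + y^2 - e^2 * x^2 \<le> 2 * cmod (herm a b)" using ine by simp
  have key: "2 * (1 - e^2) * (x * y) \<le> x^2 + y^2 - e^2 * x^2"
  proof -
    have "0 \<le> (x - y)^2" by simp
    moreover have "0 \<le> e^2 * x * (2*y - x)" using x y by (simp add: mult_nonneg_nonneg)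
    ultimately show ?thesis by (simp add: power2_eq_square algebra_simps)
  qed
  have "(1 - e^2) * (x * y) \<le> cmod (herm a b)" using key h by (simp add: algebra_simps)
  then show "1 - e^2 \<le> rat a b" unfolding rat_def x_def[symmetric] y_def[symmetric]
    using x yp by (simp add: le_divide_eq)
qed


abbreviation clin :: "(complex^'n \<Rightarrow> complex^'n) \<Rightarrow> bool" where
  "clin T \<equiv> Vector_Spaces.linear (*s) (*s) T"

lemma hausdorff_le:
  assumes A: "A \<noteq> {}" and fAB: "f ` A = B"
    and c: "\<And>a. a \<in> A \<Longrightarrow> fs_dist a (f a) \<le> c"
  shows "hausdorff_dist fs_dist A B \<le> c"
proof -
  have B: "B \<noteq> {}" using A fAB by auto
  have "(SUP a\<in>A. INF b\<in>B. fs_dist a b) \<le> c"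
  proof (rule cSUP_least[OF A])
    fix a assume a: "a \<in> A"
    have "(INF b\<in>B. fs_dist a b) \<le> fs_dist a (f a)"
      using a fAB by (intro cINF_lower) (auto intro: bdd_belowI2[where m=0] simp: fs_dist_bounds)
    then show "(INF b\<in>B. fs_dist a b) \<le> c" using c[OF a] by simp
  qed
  moreover have "(SUP b\<in>B. INF a\<in>A. fs_dist a b) \<le> c"
  proof (rule cSUP_least[OF B])
    fix b assume "b \<in> B"
    then obtain a where a: "a \<in> A" "b = f a" using fAB by auto
    have "(INF a\<in>A. fs_dist a b) \<le> fs_dist a (f a)"
      using a(1) unfolding a(2) by (intro cINF_lower) (auto intro: bdd_belowI2[where m=0] simp: fs_dist_bounds)
    then show "(INF a\<in>A. fs_dist a b) \<le> c" using c[OF a(1)] by simp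
  qed
  ultimately show ?thesis unfolding hausdorff_dist_def by simp
qed

lemma perturb:
  fixes T :: "complex^'n \<Rightarrow> complex^'n"
  assumes lin: "clin T" and bd: "\<And>x. norm (T x - x) \<le> e * norm x"
    and e: "0 \<le> e" "e \<le> 1/2" and W: "vec.subspace W" and Wne: "W \<noteq> {0}"
  shows "vec.subspace (T ` W)" "vec.dim (T ` W) = vec.dim W"
    "hausdorff_dist fs_dist (proj_subspace_of W) (proj_subspace_of (T ` W)) \<le> arccos (1 - e^2)"
proof -
  interpret T: Vector_Spaces.linear "(*s)" "(*s)" T by (rule lin)
  have nz: "T x \<noteq> 0" if "x \<noteq> 0" for x
    using rat_estimate(1)[OF that bd e] .
  have inj: "inj T"
  proof (rule injI)
    fix x y assume "T x = T y"
    then have "T (x - y) = 0" by (simp add: T.diff)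
    then show "x = y" using nz[of "x - y"] by auto
  qed
  show "vec.subspace (T ` W)" using T.subspace_image[OF W] .
  show "vec.dim (T ` W) = vec.dim W"
    using vec.dim_image_eq[OF lin] inj by (auto intro: inj_on_subset)
  have line: "T ` vec.span {a} = vec.span {T a}" for a
    using T.span_image[of "{a}"] by simp
  have img: "T ` L \<in> proj_points \<and> fs_dist L (T ` L) \<le> arccos (1 - e^2)" if L: "L \<in> proj_points" for L
  proof -
    have r: "rep L \<noteq> 0" "L = vec.span {rep L}" using rep_props[OF L] by auto
    have TL: "T ` L = vec.span {T (rep L)}" using line r(2) by metis
    have Tr: "T (rep L) \<noteq> 0" using nz r by auto
    have "1 - e^2 \<le> rat (rep L) (T (rep L))" using rat_estimate(2)[OF r(1) bd e] .
    moreover have "e^2 \<le> 1" using e by (simp add: power_le_one)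
    ultimately have "arccos (rat (rep L) (T (rep L))) \<le> arccos (1 - e^2)"
      using rat_bounds[of "rep L" "T (rep L)"] e
      by (subst arccos_le_mono) (auto simp: abs_le_iff)
    then show ?thesis using TL Tr line_in_P fs_dist_span[OF r(1) Tr] r(2) by metis
  qed
  have eq: "(\<lambda>L. T ` L) ` proj_subspace_of W = proj_subspace_of (T ` W)"
  proof
    show "(\<lambda>L. T ` L) ` proj_subspace_of W \<subseteq> proj_subspace_of (T ` W)"
      using img unfolding proj_subspace_of_def by auto
  next
    show "proj_subspace_of (T ` W) \<subseteq> (\<lambda>L. T ` L) ` proj_subspace_of W"
    proof
      fix M assume "M \<in> proj_subspace_of (T ` W)"
      then have M: "M \<in> proj_points" "M \<subseteq> T ` W" unfolding proj_subspace_of_def by auto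
      then obtain w where w: "w \<in> W" "rep M = T w" using rep_props(1)[OF M(1)] by auto
      have "w \<noteq> 0" using w rep_props(2)[OF M(1)] by auto
      then have L: "vec.span {w} \<in> proj_points" by (rule line_in_P)
      have "vec.span {w} \<subseteq> W" using w W by (simp add: vec.span_minimal)
      moreover have "T ` vec.span {w} = M" using line w rep_props(3)[OF M(1)] by metis
      ultimately show "M \<in> (\<lambda>L. T ` L) ` proj_subspace_of W"
        using L unfolding proj_subspace_of_def by force
    qed
  qed
  obtain w where w: "w \<in> W" "w \<noteq> 0" using Wne W vec.subspace_0 by blast
  have ne: "proj_subspace_of W \<noteq> {}"
    using line_in_P[OF w(2)] w W vec.span_minimal[of "{w}" W] unfolding proj_subspace_of_def by blast
  show "hausdorff_dist fs_dist (proj_subspace_of W) (proj_subspace_of (T ` W)) \<le> arccos (1 - e^2)"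
    by (rule hausdorff_le[OF ne eq]) (use img in \<open>auto simp: proj_subspace_of_def\<close>)
qed


definition Tmap :: "'i set \<Rightarrow> ('i \<Rightarrow> complex^'n) \<Rightarrow> ('i \<Rightarrow> complex^'n) \<Rightarrow> complex^'n \<Rightarrow> complex^'n" where
  "Tmap I f g x = x + (\<Sum>i\<in>I. herm x (f i) *s (g i - f i))"

definition orthonormal :: "'i set \<Rightarrow> ('i \<Rightarrow> complex^'n) \<Rightarrow> bool" where
  "orthonormal I f \<longleftrightarrow> (\<forall>i\<in>I. \<forall>j\<in>I. herm (f i) (f j) = (if i = j then 1 else 0))"

lemma Tmap_lin:
  fixes f g :: "'i \<Rightarrow> complex^'n"
  shows "clin (Tmap I f g)"
  unfolding Vector_Spaces.linear_iff
proof (intro conjI allI)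
  show "vector_space ((*s) :: complex \<Rightarrow> complex^'n \<Rightarrow> _)" by (rule vec.vector_space_axioms)
  show "vector_space ((*s) :: complex \<Rightarrow> complex^'n \<Rightarrow> _)" by (rule vec.vector_space_axioms)
  fix x y :: "complex^'n"
  show "Tmap I f g (x + y) = Tmap I f g x + Tmap I f g y"
    unfolding Tmap_def by (simp add: herm_add_left vector_sadd_rdistrib sum.distrib[symmetric] algebra_simps)
next
  fix c :: complex and x :: "complex^'n"
  show "Tmap I f g (c *s x) = c *s Tmap I f g x"
    unfolding Tmap_def by (simp add: herm_scale_left vector_add_ldistrib vec.scale_sum_right vector_smult_assoc)
qed

lemma orthonormal_norm: "orthonormal I f \<Longrightarrow> i \<in> I \<Longrightarrow> norm (f i) = 1"
proof -
  assume "orthonormal I f" "i \<in> I"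
  then have "herm (f i) (f i) = 1" unfolding orthonormal_def by auto
  then have "(norm (f i))^2 = 1" using herm_self[of "f i"] by (metis of_real_eq_1_iff)
  then show ?thesis using norm_ge_zero[of "f i"] by (simp add: power2_eq_1_iff)
qed

lemma Tmap_bound:
  assumes "orthonormal I f"
  shows "norm (Tmap I f g x - x) \<le> (\<Sum>i\<in>I. norm (g i - f i)) * norm x"
proof -
  have "norm (Tmap I f g x - x) = norm (\<Sum>i\<in>I. herm x (f i) *s (g i - f i))"
    unfolding Tmap_def by simp
  also have "\<dots> \<le> (\<Sum>i\<in>I. norm (herm x (f i) *s (g i - f i)))" by (rule norm_sum)
  also have "\<dots> \<le> (\<Sum>i\<in>I. norm (g i - f i) * norm x)"
  proof (rule sum_mono)
    fix i assume i: "i \<in> I"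
    have "norm (herm x (f i) *s (g i - f i)) = cmod (herm x (f i)) * norm (g i - f i)" by (rule norm_scale)
    also have "\<dots> \<le> (norm x * norm (f i)) * norm (g i - f i)" by (intro mult_right_mono herm_CS) auto
    finally show "norm (herm x (f i) *s (g i - f i)) \<le> norm (g i - f i) * norm x"
      using orthonormal_norm[OF assms i] by (simp add: mult.commute)
  qed
  also have "\<dots> = (\<Sum>i\<in>I. norm (g i - f i)) * norm x" by (simp add: sum_distrib_right)
  finally show ?thesis .
qed

lemma Tmap_frame:
  assumes "finite I" "orthonormal I f" "j \<in> I"
  shows "Tmap I f g (f j) = g j"
proof -
  have "(\<Sum>i\<in>I. herm (f j) (f i) *s (g i - f i)) = (\<Sum>i\<in>I. if i = j then g j - f j else 0)"
    using assms(2,3) unfolding orthonormal_def by (intro sum.cong) auto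
  also have "\<dots> = g j - f j" using assms(1,3) by simp
  finally show ?thesis unfolding Tmap_def by simp
qed

lemma Tmap_span:
  assumes "finite I" "orthonormal I f"
  shows "Tmap I f g ` vec.span (f ` I) = vec.span (g ` I)"
proof -
  interpret T: Vector_Spaces.linear "(*s)" "(*s)" "Tmap I f g" by (rule Tmap_lin)
  have "Tmap I f g ` f ` I = g ` I" using Tmap_frame[OF assms] by (force simp: image_image)
  then show ?thesis using T.span_image[of "f ` I"] by simp
qed

lemma openin_dist_topology:
  "openin (dist_topology M d) S \<longleftrightarrow> S \<subseteq> M \<and> (\<forall>x\<in>S. \<exists>e>0. \<forall>y\<in>M. d x y < e \<longrightarrow> y \<in> S)"
proof -
  have "istopology (\<lambda>U. U \<subseteq> M \<and> (\<forall>x\<in>U. \<exists>e>0. \<forall>y\<in>M. d x y < e \<longrightarrow> y \<in> U))"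
    unfolding istopology_def
  proof (rule conjI; intro allI impI)
    fix S T assume S: "S \<subseteq> M \<and> (\<forall>x\<in>S. \<exists>e>0. \<forall>y\<in>M. d x y < e \<longrightarrow> y \<in> S)"
      and T: "T \<subseteq> M \<and> (\<forall>x\<in>T. \<exists>e>0. \<forall>y\<in>M. d x y < e \<longrightarrow> y \<in> T)"
    show "S \<inter> T \<subseteq> M \<and> (\<forall>x\<in>S \<inter> T. \<exists>e>0. \<forall>y\<in>M. d x y < e \<longrightarrow> y \<in> S \<inter> T)"
    proof (intro conjI ballI)
      show "S \<inter> T \<subseteq> M" using S by auto
      fix x assume "x \<in> S \<inter> T"
      then obtain e1 e2 where "e1 > 0" "\<forall>y\<in>M. d x y < e1 \<longrightarrow> y \<in> S" "e2 > 0" "\<forall>y\<in>M. d x y < e2 \<longrightarrow> y \<in> T"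
        using S T by blast
      then show "\<exists>e>0. \<forall>y\<in>M. d x y < e \<longrightarrow> y \<in> S \<inter> T"
        by (intro exI[of _ "min e1 e2"]) auto
    qed
  next
    fix K assume K: "\<forall>S\<in>K. S \<subseteq> M \<and> (\<forall>x\<in>S. \<exists>e>0. \<forall>y\<in>M. d x y < e \<longrightarrow> y \<in> S)"
    show "\<Union>K \<subseteq> M \<and> (\<forall>x\<in>\<Union>K. \<exists>e>0. \<forall>y\<in>M. d x y < e \<longrightarrow> y \<in> \<Union>K)"
    proof (intro conjI ballI)
      show "\<Union>K \<subseteq> M" using K by auto
      fix x assume "x \<in> \<Union>K"
      then obtain S where "S \<in> K" "x \<in> S" by auto
      then obtain e where "e > 0" "\<forall>y\<in>M. d x y < e \<longrightarrow> y \<in> S" using K by blast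
      then show "\<exists>e>0. \<forall>y\<in>M. d x y < e \<longrightarrow> y \<in> \<Union>K" using \<open>S \<in> K\<close> by blast
    qed
  qed
  then show ?thesis unfolding dist_topology_def by simp
qed

lemma topspace_dist_topology: "topspace (dist_topology M d) = M"
proof -
  have "openin (dist_topology M d) M" unfolding openin_dist_topology
    by (intro conjI ballI exI[of _ 1]) auto
  moreover have "\<And>S. openin (dist_topology M d) S \<Longrightarrow> S \<subseteq> M" unfolding openin_dist_topology by blast
  ultimately show ?thesis unfolding topspace_def by blast
qed

lemma small_eps: "(e::real) > 0 \<Longrightarrow> \<exists>\<epsilon>>0. \<epsilon> \<le> 1/2 \<and> arccos (1 - \<epsilon>^2) < e"
proof -
  assume e: "e > 0"
  define e' where "e' = min e (pi/2)"
  have e': "0 < e'" "e' \<le> e" "e' \<le> pi/2" using e by (auto simp: e'_def)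
  have c: "cos e' < 1" using cos_monotone_0_pi[of 0 e'] e' by (simp add: pi_gt_zero)
  have c0: "0 \<le> cos e'" using e' by (intro cos_ge_zero) auto
  define \<epsilon> where "\<epsilon> = min (1/2) (sqrt ((1 - cos e') / 2))"
  have ep: "\<epsilon> > 0" "\<epsilon> \<le> 1/2" using c by (auto simp: \<epsilon>_def)
  have "\<epsilon>^2 \<le> (sqrt ((1 - cos e') / 2))^2" using ep
    by (intro power_mono) (auto simp: \<epsilon>_def)
  also have "\<dots> = (1 - cos e') / 2" using c by simp
  finally have "\<epsilon>^2 < 1 - cos e'" using c by simp
  moreover have "\<epsilon>^2 \<le> 1" using ep by (simp add: power_le_one)
  ultimately have "arccos (1 - \<epsilon>^2) < arccos (cos e')"
    using c0 c by (subst arccos_less_mono) (auto simp: abs_le_iff)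
  also have "\<dots> = e'" using e' by (intro arccos_cos) (auto simp: pi_gt_zero)
  finally show ?thesis using ep e' by (intro exI[of _ \<epsilon>]) auto
qed


lemma span_scale: "c \<noteq> 0 \<Longrightarrow> vec.span {c *s (a::complex^'n)} = vec.span {a}"
proof -
  assume c: "c \<noteq> 0"
  have "range (\<lambda>k. k *s (c *s a)) = range (\<lambda>k. k *s a)"
  proof
    show "range (\<lambda>k. k *s (c *s a)) \<subseteq> range (\<lambda>k. k *s a)" by (auto simp: vector_smult_assoc)
    show "range (\<lambda>k. k *s a) \<subseteq> range (\<lambda>k. k *s (c *s a))"
    proof
      fix y assume "y \<in> range (\<lambda>k. k *s a)"
      then obtain k where "y = k *s a" by auto
      then have "y = (k / c) *s (c *s a)" using c by (simp add: vector_smult_assoc)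
      then show "y \<in> range (\<lambda>k. k *s (c *s a))" by blast
    qed
  qed
  then show ?thesis by (simp add: vec.span_singleton)
qed

lemma herm_unit: "norm u = 1 \<Longrightarrow> herm u u = 1"
  using herm_self[of u] by simp

lemma grass_elem:
  "ll \<in> grassmannian k \<Longrightarrow> \<exists>W. ll = proj_subspace_of W \<and> vec.subspace W \<and> vec.dim W = k + 1"
  unfolding grassmannian_def by blast

lemma grass_sub: "ll \<in> grassmannian k \<Longrightarrow> ll \<subseteq> proj_points"
  unfolding grassmannian_def proj_subspace_of_def by blast

lemma open_part:
  fixes U :: "((complex^'n) set) set set"
  assumes U: "U \<subseteq> grassmannian k" and op: "openin (grassmannian_topology k) U"
  shows "openin proj_topology (\<Union>U)"
  unfolding proj_topology_def openin_dist_topology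
proof (intro conjI ballI)
  show "\<Union>U \<subseteq> proj_points" using U grass_sub by blast
  fix x assume "x \<in> \<Union>U"
  then obtain ll where l: "ll \<in> U" "x \<in> ll" by blast
  obtain W where W: "ll = proj_subspace_of W" "vec.subspace W" "vec.dim W = k + 1"
    using grass_elem l U by blast
  have Wne: "W \<noteq> {0}"
  proof
    assume "W = {0}" then have "vec.dim W = 0" by simp
    with W(3) show False by simp
  qed
  have xP: "x \<in> proj_points" and xW: "x \<subseteq> W" using l W unfolding proj_subspace_of_def by auto
  obtain e where e: "e > 0" "\<forall>m\<in>grassmannian k. hausdorff_dist fs_dist ll m < e \<longrightarrow> m \<in> U"
    using op l unfolding grassmannian_topology_def openin_dist_topology by blast
  obtain \<epsilon> where ep: "\<epsilon> > 0" "\<epsilon> \<le> 1/2" "arccos (1 - \<epsilon>^2) < e" using small_eps[OF e(1)] by blast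
  have "\<epsilon>^2 \<le> (1/2)^2" by (rule power_mono) (use ep in auto)
  then have ep2: "\<epsilon>^2 \<le> 1/4" by (simp add: power2_eq_square)
  define u where "u = complex_of_real (1 / norm (rep x)) *s rep x"
  have r0: "rep x \<noteq> 0" and xr: "x = vec.span {rep x}" using rep_props[OF xP] by auto
  have nu: "norm u = 1" using r0 unfolding u_def by (simp add: norm_scale norm_divide)
  have u0: "u \<noteq> 0" using nu by auto
  have xu: "x = vec.span {u}" unfolding u_def using r0 xr by (simp add: span_scale)
  have huu: "herm u u = 1" using herm_unit[OF nu] .
  define \<delta> where "\<delta> = arccos (1 - \<epsilon>^2/2)"
  have "arccos 1 < \<delta>" unfolding \<delta>_def using ep ep2 by (subst arccos_less_mono) (auto simp: abs_le_iff)
  then have \<delta>: "\<delta> > 0" by simp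
  show "\<exists>e>0. \<forall>y\<in>proj_points. fs_dist x y < e \<longrightarrow> y \<in> \<Union>U"
  proof (intro exI[of _ \<delta>] conjI ballI impI)
    show "\<delta> > 0" by (rule \<delta>)
    fix q assume qP: "q \<in> proj_points" and dq: "fs_dist x q < \<delta>"
    define r where "r = rep q"
    have r0: "r \<noteq> 0" and qr: "q = vec.span {r}" using rep_props[OF qP] unfolding r_def by auto
    have "arccos (rat u r) < arccos (1 - \<epsilon>^2/2)"
      using dq fs_dist_span[OF u0 r0] xu qr unfolding \<delta>_def by simp
    then have rho: "rat u r > 1 - \<epsilon>^2/2"
      using rat_bounds[of u r] ep2 by (subst (asm) arccos_less_mono) (auto simp: abs_le_iff)
    define h where "h = herm u r"
    have rat_eq: "rat u r = cmod h / norm r" unfolding rat_def h_def nu by simp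
    have h0: "h \<noteq> 0" using rho ep2 rat_eq by auto
    define c where "c = h / complex_of_real (cmod h * norm r)"
    have c0: "c \<noteq> 0" using h0 r0 unfolding c_def by simp
    define v where "v = c *s r"
    have nv: "norm v = 1" unfolding v_def c_def using h0 r0 by (simp add: norm_scale norm_divide norm_mult)
    have hvu: "herm v u = complex_of_real (rat u r)"
    proof -
      have "herm v u = c * cnj h" unfolding v_def h_def by (simp add: herm_scale_left herm_cnj[of r u])
      also have "\<dots> = complex_of_real ((cmod h)^2) / complex_of_real (cmod h * norm r)"
        unfolding c_def by (simp add: complex_norm_square[symmetric])
      also have "\<dots> = complex_of_real (cmod h / norm r)" using h0 by (simp add: power2_eq_square)
      finally show ?thesis using rat_eq by simp
    qed
    have "(norm (v - u))^2 = 2 - 2 * rat u r"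
    proof -
      have "(norm (v - u))^2 = (norm v)^2 + (norm u)^2 - 2 * inner v u"
        unfolding power2_norm_eq_inner by (simp add: inner_diff_left inner_diff_right inner_commute)
      also have "inner v u = rat u r" using hvu Re_herm[of v u] by simp
      finally show ?thesis using nu nv by simp
    qed
    then have "(norm (v - u))^2 \<le> \<epsilon>^2" using rho by simp
    then have vu: "norm (v - u) \<le> \<epsilon>" by (rule power2_le_imp_le) (use ep in auto)
    define T where "T = Tmap {0::nat} (\<lambda>_. u) (\<lambda>_. v)"
    have on: "orthonormal {0::nat} (\<lambda>_. u)" unfolding orthonormal_def using huu by simp
    have bd: "norm (T y - y) \<le> \<epsilon> * norm y" for y
    proof -
      have "norm (T y - y) \<le> norm (v - u) * norm y" using Tmap_bound[OF on, of "\<lambda>_. v" y] unfolding T_def by simp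
      also have "\<dots> \<le> \<epsilon> * norm y" using vu by (intro mult_right_mono) auto
      finally show ?thesis .
    qed
    note P = perturb[OF Tmap_lin[of "{0::nat}" "\<lambda>_. u" "\<lambda>_. v"] bd[unfolded T_def] less_imp_le[OF ep(1)] ep(2) W(2) Wne]
    have "\<exists>W'. proj_subspace_of (T ` W) = proj_subspace_of W' \<and> vec.subspace W' \<and> vec.dim W' = k + 1"
      by (intro exI[of _ "T ` W"]) (use P(1,2) W(3) in \<open>simp add: T_def\<close>)
    then have mG: "proj_subspace_of (T ` W) \<in> grassmannian k"
      unfolding grassmannian_def by blast
    have "hausdorff_dist fs_dist ll (proj_subspace_of (T ` W)) < e"
      unfolding W(1) T_def using P(3) ep(3) by linarith
    then have mU: "proj_subspace_of (T ` W) \<in> U" using e(2) mG by blast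
    have "T ` vec.span {u} = vec.span {v}" using Tmap_span[OF _ on, of "\<lambda>_. v"] unfolding T_def by simp
    moreover have "q = vec.span {v}" unfolding qr v_def using span_scale[OF c0, of r] by simp
    ultimately have "q = T ` x" using xu by simp
    then have "q \<subseteq> T ` W" using xW by auto
    then have "q \<in> proj_subspace_of (T ` W)" using qP unfolding proj_subspace_of_def by blast
    then show "q \<in> \<Union>U" using mU by blast
  qed
qed

lemma orthonormal_indep:
  assumes on: "orthonormal {..<m} f"
  shows "vec.independent (f ` {..<m})" "card (f ` {..<m}) = m"
proof -
  have inj: "inj_on f {..<m}"
  proof (rule inj_onI)
    fix i j assume ij: "i \<in> {..<m}" "j \<in> {..<m}" "f i = f j"
    have "herm (f j) (f j) = 1" using on ij unfolding orthonormal_def by auto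
    then have "herm (f i) (f j) = 1" using ij by simp
    then show "i = j" using on ij unfolding orthonormal_def by (metis zero_neq_one)
  qed
  then show "card (f ` {..<m}) = m" by (simp add: card_image)
  show "vec.independent (f ` {..<m})"
  proof (rule vec.independent_if_scalars_zero)
    show "finite (f ` {..<m})" by simp
    fix c x assume s: "(\<Sum>x\<in>f ` {..<m}. c x *s x) = 0" and x: "x \<in> f ` {..<m}"
    then obtain j where j: "j < m" "x = f j" by auto
    have "0 = herm (\<Sum>x\<in>f ` {..<m}. c x *s x) (f j)" using s by simp
    also have "\<dots> = (\<Sum>i<m. c (f i) * herm (f i) (f j))"
    proof -
      have "herm (\<Sum>x\<in>f ` {..<m}. c x *s x) (f j) = (\<Sum>x\<in>f ` {..<m}. c x * herm x (f j))"
        unfolding herm_def by (simp add: sum_distrib_right sum_distrib_left mult_ac sum.swap[of _ UNIV])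
      also have "\<dots> = (\<Sum>i<m. c (f i) * herm (f i) (f j))"
        using sum.reindex[OF inj, of "\<lambda>x. c x * herm x (f j)"] by simp
      finally show ?thesis .
    qed
    also have "\<dots> = (\<Sum>i<m. if i = j then c (f j) else 0)"
      using on j unfolding orthonormal_def by (intro sum.cong) auto
    also have "\<dots> = c (f j)" using j by simp
    finally show "c x = 0" using j by simp
  qed
qed

lemma orthonormal_dim:
  "orthonormal {..<m} f \<Longrightarrow> vec.dim (vec.span (f ` {..<m})) = m"
  using orthonormal_indep[of m f] by (simp add: vec.dim_eq_card_independent)

lemma herm_tendsto:
  assumes "(a \<longlongrightarrow> (x::complex^'n)) F" "(b \<longlongrightarrow> y) F"
  shows "((\<lambda>j. herm (a j) (b j)) \<longlongrightarrow> herm x y) F"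
  unfolding herm_def by (intro tendsto_intros assms)

lemma scaleR_vec_complex: "(c::real) *\<^sub>R (x::complex^'n) = complex_of_real c *s x"
  unfolding vec_eq_iff using scaleR_conv_of_real[of c "x $ i" for i] by simp

lemma vec_subspace_closed:
  assumes "vec.subspace (W::(complex^'n) set)"
  shows "closed W"
proof (rule closed_subspace)
  show "subspace W" unfolding subspace_def
    using assms vec.subspace_0 vec.subspace_add vec.subspace_scale by (auto simp: scaleR_vec_complex)
qed

lemma bw_frames:
  fixes F :: "nat \<Rightarrow> nat \<Rightarrow> complex^'n"
  assumes "\<And>j i. i < m \<Longrightarrow> norm (F j i) \<le> 1"
  shows "\<exists>r G. strict_mono r \<and> (\<forall>i<m. (\<lambda>j. F (r j) i) \<longlonglongrightarrow> G i)"
  using assms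
proof (induction m)
  case 0 show ?case by (intro exI[of _ id]) (auto simp: strict_mono_def)
next
  case (Suc m)
  then obtain r G where r: "strict_mono r" "\<forall>i<m. (\<lambda>j. F (r j) i) \<longlonglongrightarrow> G i" by force
  have "bounded (range (\<lambda>j. F (r j) m))" using Suc.prems by (auto simp: bounded_iff)
  then obtain l s where s: "strict_mono s" "((\<lambda>j. F (r j) m) \<circ> s) \<longlonglongrightarrow> l"
    using bounded_imp_convergent_subsequence by blast
  show ?case
  proof (intro exI[of _ "r \<circ> s"] exI[of _ "G(m := l)"] conjI allI impI)
    show "strict_mono (r \<circ> s)" using r s by (simp add: strict_mono_o)
    fix i assume i: "i < Suc m"
    show "(\<lambda>j. F ((r \<circ> s) j) i) \<longlonglongrightarrow> (G(m := l)) i"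
    proof (cases "i = m")
      case True then show ?thesis using s by (simp add: o_def)
    next
      case False
      then have "(\<lambda>j. F (r j) i) \<longlonglongrightarrow> G i" using r i by simp
      from LIMSEQ_subseq_LIMSEQ[OF this s(1)] show ?thesis using False by (simp add: o_def)
    qed
  qed
qed


lemma gram_schmidt:
  fixes W :: "(complex^'n) set"
  assumes "vec.subspace W" "vec.dim W = m"
  shows "\<exists>f. orthonormal {..<m} f \<and> vec.span (f ` {..<m}) = W"
  using assms
proof (induction m arbitrary: W)
  case 0
  then have "W \<subseteq> {0}" by simp
  moreover have "0 \<in> W" using 0 vec.subspace_0 by blast
  ultimately have "W = {0}" by blast
  then show ?case by (intro exI[of _ "\<lambda>_. 0"]) (simp add: orthonormal_def)
next
  case (Suc m)
  have "\<not> W \<subseteq> {0}"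
  proof
    assume "W \<subseteq> {0}" then have "vec.dim W = 0" by simp
    with Suc.prems(2) show False by simp
  qed
  then obtain w where w: "w \<in> W" "w \<noteq> 0" by blast
  define u where "u = complex_of_real (1 / norm w) *s w"
  have nu: "norm u = 1" using w unfolding u_def by (simp add: norm_scale norm_divide)
  have uW: "u \<in> W" unfolding u_def using w Suc.prems(1) by (simp add: vec.subspace_scale)
  have huu: "herm u u = 1" by (rule herm_unit[OF nu])
  define W' where "W' = {x\<in>W. herm x u = 0}"
  have sW': "vec.subspace W'"
    unfolding vec.subspace_def W'_def
    using Suc.prems(1) vec.subspace_0 vec.subspace_add vec.subspace_scale
    by (auto simp: herm_add_left herm_scale_left)
  have spW': "vec.span W' = W'" using sW' by simp
  have WW': "W = vec.span (insert u W')"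
  proof
    show "vec.span (insert u W') \<subseteq> W"
      using uW Suc.prems(1) by (intro vec.span_minimal) (auto simp: W'_def)
    show "W \<subseteq> vec.span (insert u W')"
    proof
      fix x assume x: "x \<in> W"
      have "x - herm x u *s u \<in> W'"
        unfolding W'_def using x uW Suc.prems(1) huu
        by (auto simp: herm_diff_left herm_scale_left vec.subspace_diff vec.subspace_scale)
      then show "x \<in> vec.span (insert u W')" unfolding vec.span_insert spW' by blast
    qed
  qed
  have unot: "u \<notin> vec.span W'" unfolding spW' using huu by (simp add: W'_def)
  have "vec.dim W = vec.dim W' + 1"
    using WW' vec.dim_insert[of u W'] unot by simp
  then have dW': "vec.dim W' = m" using Suc.prems(2) by simp
  obtain f' where f': "orthonormal {..<m} f'" "vec.span (f' ` {..<m}) = W'"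
    using Suc.IH[OF sW' dW'] by blast
  have f'W': "f' i \<in> W'" if "i < m" for i
    using f'(2) vec.span_base[of "f' i" "f' ` {..<m}"] that by auto
  define f where "f = f'(m := u)"
  have orth: "orthonormal {..<Suc m} f"
    unfolding orthonormal_def
  proof (intro ballI)
    fix i j assume i: "i \<in> {..<Suc m}" and j: "j \<in> {..<Suc m}"
    show "herm (f i) (f j) = (if i = j then 1 else 0)"
    proof (cases "i = m"; cases "j = m")
      assume "i = m" "j = m" then show ?thesis using huu by (simp add: f_def)
    next
      assume "i = m" "j \<noteq> m"
      then have "herm (f' j) u = 0" using f'W' j by (auto simp: W'_def)
      then show ?thesis using \<open>i = m\<close> \<open>j \<noteq> m\<close> by (simp add: f_def herm_cnj[of u])
    next
      assume "i \<noteq> m" "j = m"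
      then show ?thesis using f'W' i by (auto simp: W'_def f_def)
    next
      assume "i \<noteq> m" "j \<noteq> m"
      then show ?thesis using f'(1) i j by (auto simp: f_def orthonormal_def)
    qed
  qed
  have img: "f ` {..<Suc m} = insert u (f' ` {..<m})"
    unfolding f_def lessThan_Suc by auto
  have "vec.span (f ` {..<Suc m}) = vec.span (insert u W')"
    unfolding img vec.span_insert f'(2)[symmetric] by (simp add: vec.span_span)
  then show ?case using orth WW' by blast
qed


lemma align:
  fixes u :: "complex^'n"
  assumes nu: "norm u = 1" and qP: "q \<in> proj_points" and t: "0 < t" "t \<le> 1"
    and dq: "fs_dist (vec.span {u}) q < arccos (1 - t^2/2)"
  shows "\<exists>v. v \<in> q \<and> norm v = 1 \<and> norm (v - u) \<le> t"
proof -
  have u0: "u \<noteq> 0" using nu by auto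
  have t2: "t^2 \<le> 1" using t by (simp add: power_le_one)
  define r where "r = rep q"
  have r0: "r \<noteq> 0" and qr: "q = vec.span {r}" using rep_props[OF qP] unfolding r_def by auto
  have "arccos (rat u r) < arccos (1 - t^2/2)"
    using dq fs_dist_span[OF u0 r0] qr by simp
  then have rho: "rat u r > 1 - t^2/2"
    using rat_bounds[of u r] t2 by (subst (asm) arccos_less_mono) (auto simp: abs_le_iff)
  define h where "h = herm u r"
  have rat_eq: "rat u r = cmod h / norm r" unfolding rat_def h_def nu by simp
  have h0: "h \<noteq> 0" using rho t2 rat_eq by auto
  define c where "c = h / complex_of_real (cmod h * norm r)"
  have c0: "c \<noteq> 0" using h0 r0 unfolding c_def by simp
  define v where "v = c *s r"
  have nv: "norm v = 1" unfolding v_def c_def using h0 r0 by (simp add: norm_scale norm_divide norm_mult)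
  have hvu: "herm v u = complex_of_real (rat u r)"
  proof -
    have "herm v u = c * cnj h" unfolding v_def h_def by (simp add: herm_scale_left herm_cnj[of r u])
    also have "\<dots> = complex_of_real ((cmod h)^2) / complex_of_real (cmod h * norm r)"
      unfolding c_def by (simp add: complex_norm_square[symmetric])
    also have "\<dots> = complex_of_real (cmod h / norm r)" using h0 by (simp add: power2_eq_square)
    finally show ?thesis using rat_eq by simp
  qed
  have "(norm (v - u))^2 = 2 - 2 * rat u r"
  proof -
    have "(norm (v - u))^2 = (norm v)^2 + (norm u)^2 - 2 * inner v u"
      unfolding power2_norm_eq_inner by (simp add: inner_diff_left inner_diff_right inner_commute)
    also have "inner v u = rat u r" using hvu Re_herm[of v u] by simp
    finally show ?thesis using nu nv by simp
  qed
  then have "(norm (v - u))^2 \<le> t^2" using rho by simp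
  then have vu: "norm (v - u) \<le> t" by (rule power2_le_imp_le) (use t in auto)
  have "v \<in> q" unfolding qr v_def by (simp add: vec.span_singleton ) (rule rangeI)
  then show ?thesis using nv vu by blast
qed


lemma closed_part:
  fixes U :: "((complex^'n) set) set set"
  assumes U: "U \<subseteq> grassmannian k" and cl: "closedin (grassmannian_topology k) U"
  shows "closedin proj_topology (\<Union>U)"
proof -
  have sub: "\<Union>U \<subseteq> proj_points" using U grass_sub by blast
  have opc: "openin (grassmannian_topology k) (grassmannian k - U)"
    using cl unfolding closedin_def grassmannian_topology_def topspace_dist_topology by simp
  define I where "I = {..<k+1}"
  have finI: "finite I" unfolding I_def by simp
  have "openin proj_topology (proj_points - \<Union>U)"
    unfolding proj_topology_def openin_dist_topology
  proof (intro conjI ballI)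
    show "proj_points - \<Union>U \<subseteq> proj_points" by blast
    fix p assume p: "p \<in> proj_points - \<Union>U"
    show "\<exists>e>0. \<forall>y\<in>proj_points. fs_dist p y < e \<longrightarrow> y \<in> proj_points - \<Union>U"
    proof (rule ccontr)
      assume nc: "\<not> ?thesis"
      have pP: "p \<in> proj_points" using p by blast
      define u where "u = complex_of_real (1 / norm (rep p)) *s rep p"
      have r0: "rep p \<noteq> 0" and pr: "p = vec.span {rep p}" using rep_props[OF pP] by auto
      have nu: "norm u = 1" using r0 unfolding u_def by (simp add: norm_scale norm_divide)
      have pu: "p = vec.span {u}" unfolding u_def using r0 pr by (simp add: span_scale)
      define t :: "nat \<Rightarrow> real" where "t j = inverse (real (Suc j))" for j
      have t: "0 < t j" "t j \<le> 1" for j unfolding t_def by (auto simp: field_simps)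
      have tpos: "arccos (1 - (t j)^2/2) > 0" for j
      proof -
        have "(t j)^2 \<le> 1" using t[of j] by (simp add: power_le_one)
        moreover have "(t j)^2 > 0" using t[of j] by simp
        ultimately have "arccos 1 < arccos (1 - (t j)^2/2)"
          by (subst arccos_less_mono) (auto simp: abs_le_iff)
        then show ?thesis by simp
      qed
      have "\<forall>j. \<exists>F a. orthonormal I F \<and> proj_subspace_of (vec.span (F ` I)) \<in> U
              \<and> a \<in> vec.span (F ` I) \<and> norm a = 1 \<and> norm (a - u) \<le> t j"
      proof
        fix j
        obtain q where q: "q \<in> proj_points" "fs_dist p q < arccos (1 - (t j)^2/2)" "q \<in> \<Union>U"
          using nc tpos[of j] by force
        then obtain ll where ll: "ll \<in> U" "q \<in> ll" by blast
        obtain W where W: "ll = proj_subspace_of W" "vec.subspace W" "vec.dim W = k + 1"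
          using grass_elem ll U by blast
        obtain F where F: "orthonormal I F" "vec.span (F ` I) = W"
          using gram_schmidt[OF W(2,3)] unfolding I_def by blast
        obtain v where v: "v \<in> q" "norm v = 1" "norm (v - u) \<le> t j"
          using align[OF nu q(1) t[of j]] q(2) pu by auto
        have "q \<subseteq> W" using ll W unfolding proj_subspace_of_def by auto
        then show "\<exists>F a. orthonormal I F \<and> proj_subspace_of (vec.span (F ` I)) \<in> U
              \<and> a \<in> vec.span (F ` I) \<and> norm a = 1 \<and> norm (a - u) \<le> t j"
          using F v ll W by (intro exI[of _ F] exI[of _ v]) auto
      qed
      then obtain F a where Fa: "\<And>j. orthonormal I (F j)" "\<And>j. proj_subspace_of (vec.span (F j ` I)) \<in> U"
          "\<And>j. a j \<in> vec.span (F j ` I)" "\<And>j. norm (a j) = 1" "\<And>j. norm (a j - u) \<le> t j"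
        by metis
      have nF: "norm (F j i) \<le> 1" if "i < k + 1" for j i
        using orthonormal_norm[OF Fa(1)[of j]] that unfolding I_def by simp
      obtain r G where rG: "strict_mono r" "\<forall>i<k+1. (\<lambda>j. F (r j) i) \<longlonglongrightarrow> G i"
        using bw_frames[of "k+1" F, OF nF] by blast
      have onG: "orthonormal I G"
        unfolding orthonormal_def
      proof (intro ballI)
        fix i j assume i: "i \<in> I" and j: "j \<in> I"
        have "(\<lambda>n. herm (F (r n) i) (F (r n) j)) \<longlonglongrightarrow> herm (G i) (G j)"
          using rG(2) i j unfolding I_def by (intro herm_tendsto) auto
        moreover have "(\<lambda>n. herm (F (r n) i) (F (r n) j)) = (\<lambda>n. if i = j then 1 else 0)"
          using Fa(1) i j unfolding orthonormal_def by auto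
        ultimately show "herm (G i) (G j) = (if i = j then 1 else 0)"
          using LIMSEQ_unique tendsto_const by metis
      qed
      define Wl where "Wl = vec.span (G ` I)"
      have sWl: "vec.subspace Wl" unfolding Wl_def by simp
      have dWl: "vec.dim Wl = k + 1" unfolding Wl_def using orthonormal_dim[of "k+1" G] onG I_def by simp
      have Wl0: "Wl \<noteq> {0}"
      proof
        assume "Wl = {0}" then have "vec.dim Wl = 0" by simp
        with dWl show False by simp
      qed
      define m where "m = proj_subspace_of Wl"
      have mG: "m \<in> grassmannian k" unfolding m_def grassmannian_def using sWl dWl by blast
      have conv: "(\<lambda>j. F (r j) i - G i) \<longlonglongrightarrow> 0" if "i \<in> I" for i
        using rG(2) that unfolding I_def by (intro LIM_zero) auto
      have eps1: "(\<lambda>j. \<Sum>i\<in>I. norm (F (r j) i - G i)) \<longlonglongrightarrow> 0"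
        by (intro tendsto_null_sum tendsto_norm_zero conv)
      have eps2: "(\<lambda>j. \<Sum>i\<in>I. norm (G i - F (r j) i)) \<longlonglongrightarrow> 0"
        using eps1 by (simp add: norm_minus_commute)
      show False
      proof (cases "m \<in> U")
        case True
        define b where "b j = Tmap I (F (r j)) G (a (r j))" for j
        have bW: "b j \<in> Wl" for j
        proof -
          have "b j \<in> Tmap I (F (r j)) G ` vec.span (F (r j) ` I)"
            unfolding b_def using Fa(3) by blast
          then show ?thesis using Tmap_span[OF finI Fa(1)[of "r j"], of G] unfolding Wl_def by simp
        qed
        have bd: "norm (b j - u) \<le> (\<Sum>i\<in>I. norm (G i - F (r j) i)) + t j" for j
        proof -
          have "norm (b j - a (r j)) \<le> (\<Sum>i\<in>I. norm (G i - F (r j) i)) * norm (a (r j))"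
            unfolding b_def by (rule Tmap_bound[OF Fa(1)])
          then have 1: "norm (b j - a (r j)) \<le> (\<Sum>i\<in>I. norm (G i - F (r j) i))" using Fa(4) by simp
          have "t (r j) \<le> t j" unfolding t_def using seq_suble[OF rG(1), of j]
            by (simp add: le_imp_inverse_le)
          then have 2: "norm (a (r j) - u) \<le> t j" using Fa(5)[of "r j"] by simp
          have "norm (b j - u) \<le> norm (b j - a (r j)) + norm (a (r j) - u)"
            using dist_triangle[of "b j" u "a (r j)"] by (simp only: dist_norm)
          then show ?thesis using 1 2 by linarith
        qed
        have g0: "(\<lambda>j. (\<Sum>i\<in>I. norm (G i - F (r j) i)) + t j) \<longlonglongrightarrow> 0"
          using tendsto_add[OF eps2 LIMSEQ_inverse_real_of_nat] unfolding t_def by simp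
        have "\<forall>j. norm (b j - u) \<le> (\<Sum>i\<in>I. norm (G i - F (r j) i)) + t j" using bd by blast
        then have "(\<lambda>j. b j - u) \<longlonglongrightarrow> 0"
          by (rule Lim_null_comparison[OF always_eventually g0, of "\<lambda>j. b j - u"])
        then have "b \<longlonglongrightarrow> u" by (simp only: LIM_zero_iff)
        then have "u \<in> Wl" using closed_sequentially[of Wl b u] vec_subspace_closed[OF sWl] bW by blast
        then have "p \<subseteq> Wl" unfolding pu using sWl by (simp add: vec.span_minimal)
        then have "p \<in> m" using pP unfolding m_def proj_subspace_of_def by blast
        then show False using p True by blast
      next
        case False
        then have mGU: "m \<in> grassmannian k - U" using mG by blast
        have oo: "\<forall>x\<in>grassmannian k - U. \<exists>e>0. \<forall>y\<in>grassmannian k. hausdorff_dist fs_dist x y < e \<longrightarrow> y \<in> grassmannian k - U"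
          using opc unfolding grassmannian_topology_def openin_dist_topology by (rule conjunct2)
        from bspec[OF oo mGU] obtain e where e: "e > 0" "\<forall>m'\<in>grassmannian k. hausdorff_dist fs_dist m m' < e \<longrightarrow> m' \<in> grassmannian k - U"
          by blast
        obtain \<epsilon> where ep: "\<epsilon> > 0" "\<epsilon> \<le> 1/2" "arccos (1 - \<epsilon>^2) < e" using small_eps[OF e(1)] by blast
        have "eventually (\<lambda>j. (\<Sum>i\<in>I. norm (F (r j) i - G i)) < \<epsilon>) sequentially"
          using order_tendstoD(2)[OF eps1 ep(1)] .
        then obtain N where "\<forall>n\<ge>N. (\<Sum>i\<in>I. norm (F (r n) i - G i)) < \<epsilon>"
          unfolding eventually_sequentially by blast
        then obtain j where j: "(\<Sum>i\<in>I. norm (F (r j) i - G i)) < \<epsilon>" by blast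
        define T where "T = Tmap I G (F (r j))"
        have bdT: "norm (T y - y) \<le> \<epsilon> * norm y" for y
        proof -
          have "norm (T y - y) \<le> (\<Sum>i\<in>I. norm (F (r j) i - G i)) * norm y"
            unfolding T_def by (rule Tmap_bound[OF onG])
          also have "\<dots> \<le> \<epsilon> * norm y" using j by (intro mult_right_mono) auto
          finally show ?thesis .
        qed
        note P = perturb[OF Tmap_lin[of I G "F (r j)"] bdT[unfolded T_def] less_imp_le[OF ep(1)] ep(2) sWl Wl0]
        have TW: "Tmap I G (F (r j)) ` Wl = vec.span (F (r j) ` I)"
          unfolding Wl_def using Tmap_span[OF finI onG] by simp
        have inU: "proj_subspace_of (Tmap I G (F (r j)) ` Wl) \<in> U" unfolding TW by (rule Fa(2))
        have "hausdorff_dist fs_dist m (proj_subspace_of (Tmap I G (F (r j)) ` Wl)) < e"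
          unfolding m_def using P(3) ep(3) by linarith
        moreover have "proj_subspace_of (Tmap I G (F (r j)) ` Wl) \<in> grassmannian k" using inU U by blast
        ultimately have "proj_subspace_of (Tmap I G (F (r j)) ` Wl) \<in> grassmannian k - U" using e(2) by blast
        then show False using inU by blast
      qed
    qed
  qed
  then show ?thesis
    unfolding closedin_def proj_topology_def topspace_dist_topology using sub by simp
qed


theorem mainTheorem18:
  fixes n k :: nat
    and U :: "((complex^'n) set) set set"
  assumes "CARD('n) = n + 1"
    and "k < n"
    and "U \<subseteq> grassmannian k"
  shows "(openin (grassmannian_topology k) U \<longrightarrow> openin proj_topology (\<Union>U))
       \<and> (closedin (grassmannian_topology k) U \<longrightarrow> closedin proj_topology (\<Union>U))"
  using open_part[OF assms(3)] closed_part[OF assms(3)] by blast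

end
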